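(* Let $G$ be a graph with $\mathrm{diam}(G)=k\ge 2$. If $F$ is a set of edges of $G$ such that $d(e,f)=k$ for all distinct $e,f\in F$, then $\mathrm{gp}(G)\ge 2|F|$.
   Context: All graphs are finite, simple and connected; $\mathrm{diam}(G)$ is the maximum distance between two vertices. For edges $e=uv$ and $f=xy$, $d(e,f)=\min\{d(u,x),d(u,y),d(v,x),d(v,y)\}$. A set of vertices is a general position set if no three of its vertices lie on a common geodesic (shortest path); $\mathrm{gp}(G)$ is the maximum cardinality of a general position set of $G$. *)

theory Defs
  imports Main
begin

definition simple_graph :: "'a set \<Rightarrow> ('a \<Rightarrow> 'a \<Rightarrow> bool) \<Rightarrow> bool" where
  "simple_graph V Adj \<longleftrightarrow> finite V \<and> V \<noteq> {} \<and>
     (\<forall>u v. Adj u v \<longrightarrow> u \<in> V \<and> v \<in> V) \<and>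
     (\<forall>u v. Adj u v \<longrightarrow> Adj v u) \<and> (\<forall>u. \<not> Adj u u)"

definition walk :: "'a set \<Rightarrow> ('a \<Rightarrow> 'a \<Rightarrow> bool) \<Rightarrow> 'a list \<Rightarrow> bool" where
  "walk V Adj p \<longleftrightarrow> p \<noteq> [] \<and> set p \<subseteq> V \<and> (\<forall>i. Suc i < length p \<longrightarrow> Adj (p ! i) (p ! Suc i))"

definition walk_betw :: "'a set \<Rightarrow> ('a \<Rightarrow> 'a \<Rightarrow> bool) \<Rightarrow> 'a \<Rightarrow> 'a list \<Rightarrow> 'a \<Rightarrow> bool" where
  "walk_betw V Adj u p v \<longleftrightarrow> walk V Adj p \<and> hd p = u \<and> last p = v"

definition connected_graph :: "'a set \<Rightarrow> ('a \<Rightarrow> 'a \<Rightarrow> bool) \<Rightarrow> bool" where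
  "connected_graph V Adj \<longleftrightarrow> (\<forall>u\<in>V. \<forall>v\<in>V. \<exists>p. walk_betw V Adj u p v)"

definition gdist :: "'a set \<Rightarrow> ('a \<Rightarrow> 'a \<Rightarrow> bool) \<Rightarrow> 'a \<Rightarrow> 'a \<Rightarrow> nat" where
  "gdist V Adj u v = (LEAST n. \<exists>p. walk_betw V Adj u p v \<and> length p = Suc n)"

definition diam :: "'a set \<Rightarrow> ('a \<Rightarrow> 'a \<Rightarrow> bool) \<Rightarrow> nat" where
  "diam V Adj = Max {gdist V Adj u v | u v. u \<in> V \<and> v \<in> V}"

definition geodesic :: "'a set \<Rightarrow> ('a \<Rightarrow> 'a \<Rightarrow> bool) \<Rightarrow> 'a list \<Rightarrow> bool" where
  "geodesic V Adj p \<longleftrightarrow> walk V Adj p \<and> length p = Suc (gdist V Adj (hd p) (last p))"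

definition gp_set :: "'a set \<Rightarrow> ('a \<Rightarrow> 'a \<Rightarrow> bool) \<Rightarrow> 'a set \<Rightarrow> bool" where
  "gp_set V Adj S \<longleftrightarrow> S \<subseteq> V \<and>
     (\<forall>x\<in>S. \<forall>y\<in>S. \<forall>z\<in>S. x \<noteq> y \<and> y \<noteq> z \<and> x \<noteq> z \<longrightarrow>
        \<not> (\<exists>p. geodesic V Adj p \<and> {x, y, z} \<subseteq> set p))"

definition gp :: "'a set \<Rightarrow> ('a \<Rightarrow> 'a \<Rightarrow> bool) \<Rightarrow> nat" where
  "gp V Adj = Max {card S | S. gp_set V Adj S}"

definition edges :: "'a set \<Rightarrow> ('a \<Rightarrow> 'a \<Rightarrow> bool) \<Rightarrow> 'a set set" where
  "edges V Adj = {{u, v} | u v. Adj u v}"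

definition edge_dist :: "'a set \<Rightarrow> ('a \<Rightarrow> 'a \<Rightarrow> bool) \<Rightarrow> 'a set \<Rightarrow> 'a set \<Rightarrow> nat" where
  "edge_dist V Adj e f = Min {gdist V Adj x y | x y. x \<in> e \<and> y \<in> f}"

end

theory Submission imports Defs begin

lemma walk_app:
  assumes "walk V Adj p" "walk V Adj q" "Adj (last p) (hd q)"
  shows "walk V Adj (p @ q)"
  unfolding walk_def
proof (intro conjI allI impI)
  show "p @ q \<noteq> []" using assms(1) by (simp add: walk_def)
  show "set (p @ q) \<subseteq> V" using assms(1,2) by (simp add: walk_def)
  fix i assume i: "Suc i < length (p @ q)"
  have pn: "p \<noteq> []" "q \<noteq> []" using assms by (auto simp: walk_def)
  consider "Suc i < length p" | "Suc i = length p" | "length p \<le> i" by linarith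
  then show "Adj ((p @ q) ! i) ((p @ q) ! Suc i)"
  proof cases
    case 1 then show ?thesis using assms(1) by (simp add: walk_def nth_append)
  next
    case 2
    then have "i = length p - 1" by simp
    then show ?thesis using assms(3) pn 2
      by (simp add: nth_append last_conv_nth hd_conv_nth)
  next
    case 3
    then have "Suc (i - length p) < length q" using i by simp
    then have "Adj (q ! (i - length p)) (q ! Suc (i - length p))" using assms(2) by (simp add: walk_def)
    then show ?thesis using 3 by (simp add: nth_append Suc_diff_le)
  qed
qed

lemma walk_tl:
  assumes "walk V Adj (x # q')" "q' \<noteq> []" shows "walk V Adj q'"
  unfolding walk_def
proof (intro conjI allI impI)
  show "q' \<noteq> []" by fact
  show "set q' \<subseteq> V" using assms(1) by (simp add: walk_def)
  fix i assume "Suc i < length q'"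
  then have "Suc (Suc i) < length (x # q')" by simp
  then have "Adj ((x#q') ! Suc i) ((x#q') ! Suc (Suc i))" using assms(1) unfolding walk_def by blast
  then show "Adj (q' ! i) (q' ! Suc i)" by simp
qed

lemma walk_betw_app:
  assumes "walk_betw V Adj u p v" "walk_betw V Adj v q w"
  shows "walk_betw V Adj u (p @ tl q) w \<and> length (p @ tl q) = length p + length q - 1"
proof (cases q)
  case Nil then show ?thesis using assms by (simp add: walk_betw_def walk_def)
next
  case (Cons x q')
  show ?thesis
  proof (cases q')
    case Nil then show ?thesis using assms Cons by (auto simp add: walk_betw_def)
  next
    case (Cons y q'')
    have wq: "walk V Adj q" using assms(2) by (simp add: walk_betw_def)
    have q'ne: "q' \<noteq> []" using Cons by simp
    have wq': "walk V Adj q'" using walk_tl[of V Adj x q'] wq q'ne \<open>q = x # q'\<close> by simp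
    have "Suc 0 < length q" using \<open>q = x # q'\<close> Cons by simp
    then have "Adj (q!0) (q!Suc 0)" using wq unfolding walk_def by blast
    then have ad: "Adj (last p) (hd q')" using assms \<open>q = x # q'\<close> Cons
      unfolding walk_betw_def by simp
    have wp: "walk V Adj p" using assms(1) unfolding walk_betw_def by blast
    have "walk V Adj (p @ q')" using walk_app[OF wp wq' ad] .
    moreover have "last q' = w" using assms(2) \<open>q = x # q'\<close> q'ne unfolding walk_betw_def by simp
    moreover have "hd (p @ q') = u" using assms(1) unfolding walk_betw_def walk_def by simp
    ultimately show ?thesis using \<open>q = x # q'\<close> q'ne unfolding walk_betw_def by simp
  qed
qed

lemma walk_sub:
  assumes "walk V Adj p" "a \<le> b" "b < length p"
  shows "walk_betw V Adj (p!a) (take (Suc (b-a)) (drop a p)) (p!b)"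
proof -
  let ?q = "take (Suc (b-a)) (drop a p)"
  have "walk V Adj ?q"
    unfolding walk_def
  proof (intro conjI allI impI)
    show "?q \<noteq> []" using assms by simp
    show "set ?q \<subseteq> V" using assms(1) unfolding walk_def
      by (meson order_trans set_drop_subset set_take_subset)
    fix i assume "Suc i < length ?q"
    then have "Suc (a+i) < length p" "i < b - a" using assms by auto
    then show "Adj (?q ! i) (?q ! Suc i)"
      using assms(1) by (simp add: walk_def)
  qed
  moreover have "hd ?q = p ! a" using assms by (simp add: hd_conv_nth)
  moreover have "last ?q = p ! b"
  proof -
    have l: "length ?q = Suc (b-a)" using assms by simp
    then have "last ?q = ?q ! (b - a)" by (metis diff_Suc_1 last_conv_nth list.size(3) nat.distinct(1))
    also have "\<dots> = p ! b" using assms by simp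
    finally show ?thesis .
  qed
  ultimately show ?thesis unfolding walk_betw_def by blast
qed

lemma gdist_le:
  assumes "walk_betw V Adj u p v" shows "gdist V Adj u v \<le> length p - 1"
  unfolding gdist_def
  by (rule Least_le) (use assms in \<open>auto simp: walk_betw_def walk_def\<close>)

lemma gdist_ex:
  assumes "connected_graph V Adj" "u \<in> V" "v \<in> V"
  shows "\<exists>p. walk_betw V Adj u p v \<and> length p = Suc (gdist V Adj u v)"
proof -
  obtain p where p: "walk_betw V Adj u p v" using assms unfolding connected_graph_def by blast
  then have "\<exists>n p. walk_betw V Adj u p v \<and> length p = Suc n"
    by (metis Suc_pred length_greater_0_conv walk_betw_def walk_def)
  from LeastI_ex[OF this] show ?thesis unfolding gdist_def .
qed

lemma gdist_tri:
  assumes "connected_graph V Adj" "u \<in> V" "v \<in> V" "w \<in> V"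
  shows "gdist V Adj u w \<le> gdist V Adj u v + gdist V Adj v w"
proof -
  obtain p where p: "walk_betw V Adj u p v" "length p = Suc (gdist V Adj u v)" using gdist_ex assms by metis
  obtain q where q: "walk_betw V Adj v q w" "length q = Suc (gdist V Adj v w)" using gdist_ex assms by metis
  from walk_betw_app[OF p(1) q(1)] gdist_le show ?thesis using p(2) q(2) by fastforce
qed

lemma geo_dist:
  assumes "connected_graph V Adj" "geodesic V Adj p" "a \<le> b" "b < length p"
  shows "gdist V Adj (p!a) (p!b) = b - a"
proof -
  have w: "walk V Adj p" and l: "length p = Suc (gdist V Adj (hd p) (last p))"
    using assms(2) by (auto simp: geodesic_def)
  have pn: "p \<noteq> []" using w by (simp add: walk_def)
  have V: "set p \<subseteq> V" using w by (simp add: walk_def)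
  define n where "n = length p - 1"
  have nl: "length p = Suc n" using pn n_def by simp
  have le: "gdist V Adj (p!i) (p!j) \<le> j - i" if "i \<le> j" "j < length p" for i j
    using gdist_le[OF walk_sub[OF w that]] that by simp
  have h: "hd p = p!0" "last p = p!n" using pn by (auto simp: hd_conv_nth last_conv_nth n_def)
  have inV: "p!i \<in> V" if "i < length p" for i using V that by auto
  have Va: "p!a \<in> V" and Vb: "p!b \<in> V" and V0: "p!0 \<in> V" and Vn: "p!n \<in> V"
    using inV assms nl by auto
  have g: "gdist V Adj (p!0) (p!n) = n" using l h nl by simp
  have t1: "gdist V Adj (p!0) (p!n) \<le> gdist V Adj (p!0) (p!a) + gdist V Adj (p!a) (p!n)"
    using gdist_tri[OF assms(1) V0 Va Vn] .
  have t2: "gdist V Adj (p!a) (p!n) \<le> gdist V Adj (p!a) (p!b) + gdist V Adj (p!b) (p!n)"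
    using gdist_tri[OF assms(1) Va Vb Vn] .
  have l1: "gdist V Adj (p!0) (p!a) \<le> a" using le[of 0 a] assms by simp
  have l2: "gdist V Adj (p!b) (p!n) \<le> n - b" using le[of b n] assms nl by simp
  have l3: "gdist V Adj (p!a) (p!b) \<le> b - a" using le[of a b] assms by simp
  have "b < Suc n" using assms nl by simp
  then show ?thesis using g t1 t2 l1 l2 l3 assms(3) by linarith
qed

lemma gdist_self:
  assumes "x \<in> V" shows "gdist V Adj x x = 0"
proof -
  have "walk_betw V Adj x [x] x" using assms by (simp add: walk_betw_def walk_def)
  from gdist_le[OF this] show ?thesis by simp
qed

lemma gdist_le_diam:
  assumes "simple_graph V Adj" "u \<in> V" "v \<in> V"
  shows "gdist V Adj u v \<le> diam V Adj"
proof -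
  have "{gdist V Adj u v | u v. u \<in> V \<and> v \<in> V} = (\<lambda>(u,v). gdist V Adj u v) ` (V \<times> V)" by auto
  moreover have "finite V" using assms(1) by (simp add: simple_graph_def)
  ultimately have "finite {gdist V Adj u v | u v. u \<in> V \<and> v \<in> V}" by simp
  then show ?thesis unfolding diam_def using assms by (intro Max_ge) auto
qed

lemma edge_facts:
  assumes "simple_graph V Adj" "e \<in> edges V Adj"
  shows "finite e" "card e = 2" "e \<subseteq> V"
proof -
  obtain u v where e: "e = {u,v}" "Adj u v" using assms(2) unfolding edges_def by blast
  then have "u \<noteq> v" "u \<in> V" "v \<in> V" using assms(1) unfolding simple_graph_def by metis+
  then show "finite e" "card e = 2" "e \<subseteq> V" using e by auto
qed

lemma edist_lower:
  assumes "edge_dist V Adj e f = k" "finite e" "finite f" "x \<in> e" "y \<in> f"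
  shows "k \<le> gdist V Adj x y"
proof -
  have "{gdist V Adj x y | x y. x \<in> e \<and> y \<in> f} = (\<lambda>(x,y). gdist V Adj x y) ` (e \<times> f)" by auto
  then have "finite {gdist V Adj x y | x y. x \<in> e \<and> y \<in> f}" using assms by simp
  then have "Min {gdist V Adj x y | x y. x \<in> e \<and> y \<in> f} \<le> gdist V Adj x y"
    using assms by (intro Min_le) auto
  then show ?thesis using assms(1) unfolding edge_dist_def by simp
qed

theorem proposition4p4:
  fixes V :: "'a set" and Adj :: "'a \<Rightarrow> 'a \<Rightarrow> bool" and F :: "'a set set" and k :: nat
  assumes "simple_graph V Adj" and "connected_graph V Adj"
    and "diam V Adj = k" and "k \<ge> 2"
    and "F \<subseteq> edges V Adj"
    and "\<forall>e\<in>F. \<forall>f\<in>F. e \<noteq> f \<longrightarrow> edge_dist V Adj e f = k"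
  shows "gp V Adj \<ge> 2 * card F"
proof -
  note sg = assms(1) and cg = assms(2)
  have fin: "finite e" and c2: "card e = 2" and eV: "e \<subseteq> V" if "e \<in> F" for e
    using edge_facts[OF sg] assms(5) that by auto
  have low: "k \<le> gdist V Adj x y" if "e \<in> F" "f \<in> F" "e \<noteq> f" "x \<in> e" "y \<in> f" for e f x y
    using edist_lower[of V Adj e f k x y] assms(6) that fin by blast
  have disj: "e \<inter> f = {}" if "e \<in> F" "f \<in> F" "e \<noteq> f" for e f
  proof (rule ccontr)
    assume "e \<inter> f \<noteq> {}"
    then obtain x where "x \<in> e" "x \<in> f" by blast
    then have "k \<le> gdist V Adj x x" by (intro low[OF that])
    moreover have "gdist V Adj x x = 0" using gdist_self[of x V Adj] eV[OF that(1)] \<open>x \<in> e\<close> by (simp add: subset_iff)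
    ultimately show False using assms(4) by simp
  qed
  have finV: "finite V" using sg by (simp add: simple_graph_def)
  have "F \<subseteq> Pow V" using eV by blast
  then have finF: "finite F" using finV by (simp add: finite_subset)
  define S where "S = \<Union>F"
  have cardS: "card S = 2 * card F"
  proof -
    have "card S = sum card F" unfolding S_def
      by (rule card_Union_disjoint) (use disj fin in \<open>auto simp: pairwise_def disjnt_def\<close>)
    also have "\<dots> = sum (\<lambda>_. 2) F" using c2 by (intro sum.cong) auto
    finally show ?thesis by simp
  qed
  have dk: "gdist V Adj u v \<le> k" if "u \<in> V" "v \<in> V" for u v
    using gdist_le_diam[OF sg that] assms(3) by simp
  have key: False if geo: "geodesic V Adj p" and abc: "a < b" "b < c" "c < length p"
    and inS: "p!a \<in> S" "p!b \<in> S" "p!c \<in> S"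
    and dis: "p!a \<noteq> p!b" "p!b \<noteq> p!c" "p!a \<noteq> p!c" for p a b c
  proof -
    obtain ea where ea: "ea \<in> F" "p!a \<in> ea" using inS(1) unfolding S_def by (rule UnionE)
    obtain eb where eb: "eb \<in> F" "p!b \<in> eb" using inS(2) unfolding S_def by (rule UnionE)
    obtain ec where ec: "ec \<in> F" "p!c \<in> ec" using inS(3) unfolding S_def by (rule UnionE)
    have notall: "\<not> (ea = eb \<and> eb = ec)"
    proof
      assume "ea = eb \<and> eb = ec"
      then have "{p!a, p!b, p!c} \<subseteq> ea" using ea eb ec by auto
      then have "card {p!a, p!b, p!c} \<le> card ea" using fin ea(1) by (intro card_mono) auto
      then show False using dis c2 ea(1) by simp
    qed
    have Vp: "set p \<subseteq> V" using geo by (simp add: geodesic_def walk_def)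
    have gac: "gdist V Adj (p!a) (p!c) = c - a" using geo_dist[OF cg geo] abc by simp
    have gab: "gdist V Adj (p!a) (p!b) = b - a" using geo_dist[OF cg geo] abc by simp
    have gbc: "gdist V Adj (p!b) (p!c) = c - b" using geo_dist[OF cg geo] abc by simp
    have "p!a \<in> V" "p!c \<in> V" using Vp abc by (simp_all add: subset_iff)
    then have h0: "c - a \<le> k" using dk[of "p!a" "p!c"] gac by simp
    have h1: "ea \<noteq> eb \<longrightarrow> k \<le> b - a" using low[OF ea(1) eb(1) _ ea(2) eb(2)] gab by simp
    have h2: "eb \<noteq> ec \<longrightarrow> k \<le> c - b" using low[OF eb(1) ec(1) _ eb(2) ec(2)] gbc by simp
    have h3: "ea \<noteq> ec \<longrightarrow> k \<le> c - a" using low[OF ea(1) ec(1) _ ea(2) ec(2)] gac by simp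
    show False
    proof (cases "ea = eb")
      case True
      then have "k \<le> c - b" using notall h2 by blast
      then show False using h0 abc assms(4) by linarith
    next
      case False
      then have hb: "k \<le> b - a" using h1 by blast
      show False
      proof (cases "eb = ec")
        case True
        then have "k \<le> c - a" using False h3 by blast
        then show False using h0 hb abc assms(4) by linarith
      next
        case F2: False
        then have "k \<le> c - b" using h2 by blast
        then show False using h0 hb abc assms(4) by linarith
      qed
    qed
  qed
  have gpS: "gp_set V Adj S"
    unfolding gp_set_def
  proof (intro conjI ballI impI notI)
    show "S \<subseteq> V" using eV unfolding S_def by blast
    fix x y z assume xyz: "x \<in> S" "y \<in> S" "z \<in> S" "x \<noteq> y \<and> y \<noteq> z \<and> x \<noteq> z"
    assume "\<exists>p. geodesic V Adj p \<and> {x, y, z} \<subseteq> set p"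
    then obtain p where p: "geodesic V Adj p" "x \<in> set p" "y \<in> set p" "z \<in> set p" by auto
    obtain i where i: "i < length p" "p!i = x" using p(2) by (metis in_set_conv_nth)
    obtain j where j: "j < length p" "p!j = y" using p(3) by (metis in_set_conv_nth)
    obtain l where l: "l < length p" "p!l = z" using p(4) by (metis in_set_conv_nth)
    have "i \<noteq> j" "j \<noteq> l" "i \<noteq> l" using i j l xyz by auto
    then consider "i < j" "j < l" | "i < l" "l < j" | "j < i" "i < l" | "j < l" "l < i"
      | "l < i" "i < j" | "l < j" "j < i" by linarith
    then show False
    proof cases
      case 1 then show ?thesis by (intro key[OF p(1), of i j l]) (use i j l xyz in auto)
    next
      case 2 then show ?thesis by (intro key[OF p(1), of i l j]) (use i j l xyz in auto)
    next
      case 3 then show ?thesis by (intro key[OF p(1), of j i l]) (use i j l xyz in auto)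
    next
      case 4 then show ?thesis by (intro key[OF p(1), of j l i]) (use i j l xyz in auto)
    next
      case 5 then show ?thesis by (intro key[OF p(1), of l i j]) (use i j l xyz in auto)
    next
      case 6 then show ?thesis by (intro key[OF p(1), of l j i]) (use i j l xyz in auto)
    qed
  qed
  have "finite {card S | S. gp_set V Adj S}"
  proof (rule finite_subset)
    show "{card S | S. gp_set V Adj S} \<subseteq> card ` Pow V" unfolding gp_set_def by auto
    show "finite (card ` Pow V)" using finV by simp
  qed
  then have "card S \<le> gp V Adj" unfolding gp_def using gpS by (intro Max_ge) auto
  then show ?thesis using cardS by simp
qed

end
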